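(* For all closed closures $(t,e)$ and $(s,d)$, $(t, e) \approx_{\mathrm{app}} (s, d)$ if and only if $\langle t, e, []\rangle_{\mathrm{ev}} \approx \langle s, d, []\rangle_{\mathrm{ev}}$, where $\approx$ is machine bisimilarity on configurations of the AB machine.
   Context: De Bruijn terms $t,s ::= n \mid t\,s \mid \lambda.t$ ($n\in\mathbb N$); closures $\sigma ::= (t,e)$; environments $e,d ::= \sigma :: e \mid \varepsilon$; stacks $\pi ::= \sigma::\pi \mid []$; application stacks $\rho ::= (t,\kappa)::\rho \mid \epsilon$ with $\kappa\in\mathbb N$. A term is closed if it has no free indices; a closure $(t,e)$ is closed if the length of $e$ exceeds the largest free index of $t$ and all closures in $e$ are closed. AB machine configurations: $\langle t, e, \pi\rangle_{\mathrm{ev}}$, $\langle n, \rho, \sigma\rangle_{\mathrm{ind}}$, $\langle t, \kappa, \rho, \sigma\rangle_{\mathrm{tm}}$. Transitions (labelled by $\tau$ or by a flag): $\langle t\,s, e, \pi\rangle_{\mathrm{ev}} \xrightarrow\tau \langle t, e, (s,e)::\pi\rangle_{\mathrm{ev}}$; $\langle 0, (t,e)::d, \pi\rangle_{\mathrm{ev}}\xrightarrow\tau\langle t,e,\pi\rangle_{\mathrm{ev}}$; $\langle n+1, (t,e)::d,\pi\rangle_{\mathrm{ev}} \xrightarrow\tau\langle n, d,\pi\rangle_{\mathrm{ev}}$; $\langle\lambda.t, e, \sigma::\pi\rangle_{\mathrm{ev}} \xrightarrow\tau \langle t, \sigma::e,\pi\rangle_{\mathrm{ev}}$; $\langle \lambda.t,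 e, []\rangle_{\mathrm{ev}} \xrightarrow{\mathsf{arg}} \langle 0, \epsilon, (t,e)\rangle_{\mathrm{ind}}$; $\langle n,\rho,\sigma\rangle_{\mathrm{ind}}\xrightarrow{\mathsf{suc}}\langle n+1,\rho,\sigma\rangle_{\mathrm{ind}}$; $\langle n,\rho,\sigma\rangle_{\mathrm{ind}}\xrightarrow{\mathsf{var}}\langle n, n+1,\rho,\sigma\rangle_{\mathrm{tm}}$; $\langle t,\kappa+1,\rho,\sigma\rangle_{\mathrm{tm}}\xrightarrow{\mathsf{lam}}\langle\lambda.t,\kappa,\rho,\sigma\rangle_{\mathrm{tm}}$; $\langle t,0,\rho,\sigma\rangle_{\mathrm{tm}}\xrightarrow{\mathsf{lam}}\langle\lambda.t,0,\rho,\sigma\rangle_{\mathrm{tm}}$; $\langle t,\kappa,\rho,\sigma\rangle_{\mathrm{tm}}\xrightarrow{\mathsf{appfun}}\langle 0, (t,\kappa)::\rho,\sigma\rangle_{\mathrm{ind}}$; $\langle s,\kappa_1,(t,\kappa_2)::\rho,\sigma\rangle_{\mathrm{tm}}\xrightarrow{\mathsf{app}}\langle t\,s,\max(\kappa_1,\kappa_2),\rho,\sigma\rangle_{\mathrm{tm}}$; $\langle t, 0, \epsilon, (s,e)\rangle_{\mathrm{tm}}\xrightarrow{\mathsf{done}}\langle s, (t,\varepsilon)::e, []\rangle_{\mathrm{ev}}$. The $\tau$-transitions alone form the (environment-based) KAM, written $\to_\tau$. Applicative bisimulation: a symmetric relation $\mathcal R$ on closed closures such that $(t,e)\mathcal R(s,d)$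 and $\langle t,e,[]\rangle_{\mathrm{ev}}\xrightarrow\tau^*\langle\lambda.t',e',[]\rangle_{\mathrm{ev}}$ imply there exist $s',d'$ with $\langle s,d,[]\rangle_{\mathrm{ev}}\xrightarrow\tau^*\langle\lambda.s',d',[]\rangle_{\mathrm{ev}}$ and, for all closed terms $t''$, $(t',(t'',\varepsilon)::e')\,\mathcal R\,(s',(t'',\varepsilon)::d')$. $\approx_{\mathrm{app}}$ is the largest applicative bisimulation. Machine bisimulation: a symmetric relation $\mathcal R$ on configurations such that $C_1\mathcal RC_2$ implies, for every flag $F$: if $C_1\xrightarrow\tau^*\xrightarrow F C_1'$ then $C_2\xrightarrow\tau^*\xrightarrow F C_2'$ for some $C_2'$ with $C_1'\mathcal RC_2'$; and if $C_1\xrightarrow\tau^*\xrightarrow F$ by a terminating transition, then so does $C_2$. $\approx$ is the largest machine bisimulation. *)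

theory Defs
  imports Main
begin

datatype tm = DVar nat | DApp tm tm | DLam tm

text \<open>A closure (t,e); environments are lists of closures (head = index 0).\<close>
datatype clo = Clo tm "clo list"

type_synonym env = "clo list"
type_synonym stack = "clo list"
type_synonym astack = "(tm \<times> nat) list"

fun closed_at :: "nat \<Rightarrow> tm \<Rightarrow> bool" where
  "closed_at n (DVar k) = (k < n)"
| "closed_at n (DApp t s) = (closed_at n t \<and> closed_at n s)"
| "closed_at n (DLam t) = closed_at (Suc n) t"

definition closed_tm :: "tm \<Rightarrow> bool" where
  "closed_tm t = closed_at 0 t"

inductive closed_clo :: "clo \<Rightarrow> bool" where
  "closed_at (length e) t \<Longrightarrow> (\<forall>c\<in>set e. closed_clo c) \<Longrightarrow> closed_clo (Clo t e)"

datatype conf =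
    Ev tm env stack
  | Ind nat astack clo
  | Tmc tm nat astack clo

datatype flag = FArg | FSuc | FVar | FLam | FAppFun | FApp | FDone

datatype label = Tau | Lbl flag

text \<open>Transitions; the target \<open>None\<close> would denote a terminating transition
  (the AB machine has none).\<close>
inductive step :: "conf \<Rightarrow> label \<Rightarrow> conf option \<Rightarrow> bool" where
  ev_app: "step (Ev (DApp t s) e \<pi>) Tau (Some (Ev t e (Clo s e # \<pi>)))"
| ev_zero: "step (Ev (DVar 0) (Clo t e # d) \<pi>) Tau (Some (Ev t e \<pi>))"
| ev_suc: "step (Ev (DVar (Suc n)) (Clo t e # d) \<pi>) Tau (Some (Ev (DVar n) d \<pi>))"
| ev_lam: "step (Ev (DLam t) e (\<sigma> # \<pi>)) Tau (Some (Ev t (\<sigma> # e) \<pi>))"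
| st_arg: "step (Ev (DLam t) e []) (Lbl FArg) (Some (Ind 0 [] (Clo t e)))"
| st_suc: "step (Ind n \<rho> \<sigma>) (Lbl FSuc) (Some (Ind (Suc n) \<rho> \<sigma>))"
| st_var: "step (Ind n \<rho> \<sigma>) (Lbl FVar) (Some (Tmc (DVar n) (Suc n) \<rho> \<sigma>))"
| lam_suc: "step (Tmc t (Suc \<kappa>) \<rho> \<sigma>) (Lbl FLam) (Some (Tmc (DLam t) \<kappa> \<rho> \<sigma>))"
| lam_zero: "step (Tmc t 0 \<rho> \<sigma>) (Lbl FLam) (Some (Tmc (DLam t) 0 \<rho> \<sigma>))"
| appfun: "step (Tmc t \<kappa> \<rho> \<sigma>) (Lbl FAppFun) (Some (Ind 0 ((t, \<kappa>) # \<rho>) \<sigma>))"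
| st_app: "step (Tmc s \<kappa>1 ((t, \<kappa>2) # \<rho>) \<sigma>) (Lbl FApp) (Some (Tmc (DApp t s) (max \<kappa>1 \<kappa>2) \<rho> \<sigma>))"
| st_done: "step (Tmc t 0 [] (Clo s e)) (Lbl FDone) (Some (Ev s (Clo t [] # e) []))"

definition tau_step :: "conf \<Rightarrow> conf \<Rightarrow> bool" where
  "tau_step C C' = step C Tau (Some C')"

abbreviation tau_star :: "conf \<Rightarrow> conf \<Rightarrow> bool" where
  "tau_star \<equiv> tau_step\<^sup>*\<^sup>*"

definition app_bisimulation :: "(clo \<Rightarrow> clo \<Rightarrow> bool) \<Rightarrow> bool" where
  "app_bisimulation R \<longleftrightarrow>
     (\<forall>x y. R x y \<longrightarrow> R y x) \<and>
     (\<forall>x y. R x y \<longrightarrow> closed_clo x \<and> closed_clo y) \<and>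
     (\<forall>t e s d t' e'. R (Clo t e) (Clo s d) \<longrightarrow>
        tau_star (Ev t e []) (Ev (DLam t') e' []) \<longrightarrow>
        (\<exists>s' d'. tau_star (Ev s d []) (Ev (DLam s') d' []) \<and>
           (\<forall>t''. closed_tm t'' \<longrightarrow>
              R (Clo t' (Clo t'' [] # e')) (Clo s' (Clo t'' [] # d')))))"

definition app_bisim :: "clo \<Rightarrow> clo \<Rightarrow> bool" where
  "app_bisim x y \<longleftrightarrow> (\<exists>R. app_bisimulation R \<and> R x y)"

definition mach_bisimulation :: "(conf \<Rightarrow> conf \<Rightarrow> bool) \<Rightarrow> bool" where
  "mach_bisimulation R \<longleftrightarrow>
     (\<forall>x y. R x y \<longrightarrow> R y x) \<and>
     (\<forall>C1 C2 F. R C1 C2 \<longrightarrow>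
        (\<forall>C1' C1''. tau_star C1 C1' \<longrightarrow> step C1' (Lbl F) (Some C1'') \<longrightarrow>
           (\<exists>C2' C2''. tau_star C2 C2' \<and> step C2' (Lbl F) (Some C2'') \<and> R C1'' C2'')) \<and>
        (\<forall>C1'. tau_star C1 C1' \<longrightarrow> step C1' (Lbl F) None \<longrightarrow>
           (\<exists>C2'. tau_star C2 C2' \<and> step C2' (Lbl F) None)))"

definition mach_bisim :: "conf \<Rightarrow> conf \<Rightarrow> bool" where
  "mach_bisim x y \<longleftrightarrow> (\<exists>R. mach_bisimulation R \<and> R x y)"

end

theory Submission
  imports Defs
begin

lemma step_no_None: "\<not> step C l None"
  by (auto elim: step.cases)

lemma step_det: "step C l X \<Longrightarrow> step C l Y \<Longrightarrow> X = Y"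
  by (induct rule: step.induct) (auto elim: step.cases)

lemma tau_Ind: "tau_star (Ind n r s) C \<Longrightarrow> C = Ind n r s"
  by (erule converse_rtranclpE) (auto simp: tau_step_def elim: step.cases)

lemma tau_Tmc: "tau_star (Tmc u k r s) C \<Longrightarrow> C = Tmc u k r s"
  by (erule converse_rtranclpE) (auto simp: tau_step_def elim: step.cases)

lemma tau_Ev: "tau_star C1 C \<Longrightarrow> (\<exists>t e p. C1 = Ev t e p) \<Longrightarrow> \<exists>t e p. C = Ev t e p"
  by (induct rule: rtranclp_induct) (auto simp: tau_step_def elim: step.cases)

definition cconf :: "tm \<Rightarrow> env \<Rightarrow> stack \<Rightarrow> bool" where
  "cconf t e p = (closed_at (length e) t \<and> (\<forall>c\<in>set e. closed_clo c) \<and> (\<forall>c\<in>set p. closed_clo c))"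

lemma cconf_step: "tau_step (Ev t e p) (Ev t' e' p') \<Longrightarrow> cconf t e p \<Longrightarrow> cconf t' e' p'"
  unfolding tau_step_def
  by (erule step.cases) (auto simp: cconf_def elim: closed_clo.cases intro: closed_clo.intros)

lemma cconf_star: "tau_star C C' \<Longrightarrow> (\<And>t e p. C = Ev t e p \<Longrightarrow> cconf t e p)
   \<Longrightarrow> C' = Ev t' e' p' \<Longrightarrow> cconf t' e' p'"
proof (induct arbitrary: t' e' p' rule: rtranclp_induct)
  case base then show ?case by blast
next
  case (step y z)
  have "\<exists>t e p. z = Ev t e p" using step by blast
  obtain a b c where y: "y = Ev a b c"
    using step(2) step(5) by (auto simp: tau_step_def elim: step.cases)
  have "cconf a b c" using step(3)[OF step(4) y] .
  then show ?case using cconf_step step(2) step(5) y by blast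
qed

lemma closed_final:
  assumes "closed_clo (Clo t e)" "tau_star (Ev t e []) (Ev (DLam t') e' [])" "closed_tm u"
  shows "closed_clo (Clo t' (Clo u [] # e'))"
proof -
  have "cconf t e []" using assms(1) by (auto simp: cconf_def elim: closed_clo.cases)
  then have "cconf (DLam t') e' []" using cconf_star[OF assms(2)] by blast
  moreover have "closed_clo (Clo u [])" using assms(3)
    by (auto simp: closed_tm_def intro: closed_clo.intros)
  ultimately show ?thesis by (auto simp: cconf_def intro!: closed_clo.intros)
qed

lemma mach_bisim_sym: "mach_bisim x y \<Longrightarrow> mach_bisim y x"
  unfolding mach_bisim_def mach_bisimulation_def by blast

lemma mach_bisim_step:
  assumes "mach_bisim C1 C2" "tau_star C1 C1'" "step C1' (Lbl F) (Some C1'')"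
  shows "\<exists>C2' C2''. tau_star C2 C2' \<and> step C2' (Lbl F) (Some C2'') \<and> mach_bisim C1'' C2''"
proof -
  obtain R where R: "mach_bisimulation R" "R C1 C2" using assms(1) mach_bisim_def by blast
  then obtain C2' C2'' where "tau_star C2 C2'" "step C2' (Lbl F) (Some C2'')" "R C1'' C2''"
    using assms unfolding mach_bisimulation_def by blast
  then show ?thesis using R(1) mach_bisim_def by blast
qed

lemma bis_det:
  assumes "mach_bisim C1 C2" "step C1 (Lbl F) (Some C1'')"
    "\<And>C. tau_star C2 C \<Longrightarrow> C = C2" "step C2 (Lbl F) (Some X)"
  shows "mach_bisim C1'' X"
proof -
  obtain C2' C2'' where "tau_star C2 C2'" "step C2' (Lbl F) (Some C2'')" "mach_bisim C1'' C2''"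
    using mach_bisim_step[OF assms(1) rtranclp.rtrancl_refl assms(2)] by blast
  then show ?thesis using assms(3,4) step_det by blast
qed

fun lv :: "tm \<Rightarrow> nat" where
  "lv (DVar n) = Suc n"
| "lv (DApp a b) = max (lv b) (lv a)"
| "lv (DLam a) = lv a - 1"

lemma lv_closed: "closed_at n u \<Longrightarrow> lv u \<le> n"
proof (induct u arbitrary: n)
  case (DLam u)
  then have "lv u \<le> Suc n" by simp
  then show ?case by simp
qed auto

lemma gen_var: "mach_bisim (Ind 0 r s1) (Ind 0 r s2) \<Longrightarrow> mach_bisim (Ind n r s1) (Ind n r s2)"
proof (induct n)
  case 0 then show ?case .
next
  case (Suc n)
  then show ?case using bis_det[OF Suc(1)[OF Suc(2)] st_suc _ st_suc] tau_Ind by blast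
qed

lemma gen_tm: "mach_bisim (Ind 0 r s1) (Ind 0 r s2) \<Longrightarrow>
   mach_bisim (Tmc u (lv u) r s1) (Tmc u (lv u) r s2)"
proof (induct u arbitrary: r)
  case (DVar n)
  then show ?case using bis_det[OF gen_var[OF DVar] st_var _ st_var] tau_Ind by simp
next
  case (DApp a b)
  have 1: "mach_bisim (Tmc a (lv a) r s1) (Tmc a (lv a) r s2)" using DApp by blast
  have 2: "mach_bisim (Ind 0 ((a, lv a) # r) s1) (Ind 0 ((a, lv a) # r) s2)"
    using bis_det[OF 1 appfun _ appfun] tau_Tmc by blast
  have 3: "mach_bisim (Tmc b (lv b) ((a, lv a) # r) s1) (Tmc b (lv b) ((a, lv a) # r) s2)"
    using DApp(2)[OF 2] .
  show ?case using bis_det[OF 3 st_app _ st_app] tau_Tmc by simp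
next
  case (DLam a)
  have 1: "mach_bisim (Tmc a (lv a) r s1) (Tmc a (lv a) r s2)" using DLam by blast
  show ?case
  proof (cases "lv a")
    case 0
    then show ?thesis using bis_det[OF 1[unfolded 0] lam_zero _ lam_zero] tau_Tmc by simp
  next
    case (Suc k)
    then show ?thesis using bis_det[OF 1[unfolded Suc] lam_suc _ lam_suc] tau_Tmc by simp
  qed
qed

lemma app_bisim_sym: "app_bisim x y \<Longrightarrow> app_bisim y x"
  unfolding app_bisim_def app_bisimulation_def by blast

lemma app_bisim_step:
  assumes "app_bisim (Clo t e) (Clo s d)" "tau_star (Ev t e []) (Ev (DLam t') e' [])"
  shows "\<exists>s' d'. tau_star (Ev s d []) (Ev (DLam s') d' []) \<and>
           (\<forall>t''. closed_tm t'' \<longrightarrow> app_bisim (Clo t' (Clo t'' [] # e')) (Clo s' (Clo t'' [] # d')))"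
proof -
  obtain R where R: "app_bisimulation R" "R (Clo t e) (Clo s d)" using assms(1) app_bisim_def by blast
  then obtain s' d' where "tau_star (Ev s d []) (Ev (DLam s') d' [])"
    "\<forall>t''. closed_tm t'' \<longrightarrow> R (Clo t' (Clo t'' [] # e')) (Clo s' (Clo t'' [] # d'))"
    using assms(2) unfolding app_bisimulation_def by blast
  then show ?thesis using R(1) unfolding app_bisim_def by blast
qed

definition Q :: "clo \<Rightarrow> clo \<Rightarrow> bool" where
  "Q s1 s2 = (case s1 of Clo t' e' \<Rightarrow> case s2 of Clo s' d' \<Rightarrow>
     (\<forall>u. closed_tm u \<longrightarrow> app_bisim (Clo t' (Clo u [] # e')) (Clo s' (Clo u [] # d'))))"

definition okr :: "astack \<Rightarrow> bool" where
  "okr r = (\<forall>(t,k)\<in>set r. closed_at k t)"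

definition M :: "conf \<Rightarrow> conf \<Rightarrow> bool" where
  "M C1 C2 = ((\<exists>t e s d. C1 = Ev t e [] \<and> C2 = Ev s d [] \<and> app_bisim (Clo t e) (Clo s d))
   \<or> (\<exists>n r s1 s2. C1 = Ind n r s1 \<and> C2 = Ind n r s2 \<and> Q s1 s2 \<and> okr r)
   \<or> (\<exists>u k r s1 s2. C1 = Tmc u k r s1 \<and> C2 = Tmc u k r s2 \<and> Q s1 s2 \<and> okr r \<and> closed_at k u))"

lemma Q_sym: "Q a b \<Longrightarrow> Q b a"
  unfolding Q_def by (auto split: clo.splits intro: app_bisim_sym)

lemma closed_mono: "closed_at n u \<Longrightarrow> n \<le> m \<Longrightarrow> closed_at m u"
  by (induct u arbitrary: n m) auto

lemma wit: "step C2 (Lbl F) (Some X) \<Longrightarrow> M Y X \<Longrightarrow>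
  \<exists>C2' C2''. tau_star C2 C2' \<and> step C2' (Lbl F) (Some C2'') \<and> M Y C2''"
  by blast

lemma M_sim:
  assumes "M C1 C2" "tau_star C1 C1'" "step C1' (Lbl F) (Some C1'')"
  shows "\<exists>C2' C2''. tau_star C2 C2' \<and> step C2' (Lbl F) (Some C2'') \<and> M C1'' C2''"
  using assms(1)[unfolded M_def]
proof (elim disjE exE conjE)
  fix t e s d assume h: "C1 = Ev t e []" "C2 = Ev s d []" "app_bisim (Clo t e) (Clo s d)"
  obtain a b p where c1: "C1' = Ev a b p" using tau_Ev[OF assms(2)] h by blast
  obtain a' where a: "a = DLam a'" "p = []" "F = FArg" "C1'' = Ind 0 [] (Clo a' b)"
    using assms(3) c1 by (auto elim: step.cases)
  obtain s' d' where S: "tau_star (Ev s d []) (Ev (DLam s') d' [])"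
    "\<forall>t''. closed_tm t'' \<longrightarrow> app_bisim (Clo a' (Clo t'' [] # b)) (Clo s' (Clo t'' [] # d'))"
    using app_bisim_step[OF h(3), of a' b] assms(2) h c1 a by auto
  have m: "M (Ind 0 [] (Clo a' b)) (Ind 0 [] (Clo s' d'))"
    unfolding M_def Q_def okr_def using S(2) by simp
  have st: "step (Ev (DLam s') d' []) (Lbl F) (Some (Ind 0 [] (Clo s' d')))"
    using a st_arg by simp
  have "tau_star C2 (Ev (DLam s') d' []) \<and> step (Ev (DLam s') d' []) (Lbl F) (Some (Ind 0 [] (Clo s' d')))
     \<and> M C1'' (Ind 0 [] (Clo s' d'))"
    using m st S(1) h(2) a(4) by simp
  then show ?thesis by blast
next
  fix n r s1 s2 assume h: "C1 = Ind n r s1" "C2 = Ind n r s2" "Q s1 s2" "okr r"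
  have c1: "C1' = C1" using tau_Ind assms(2) h by blast
  show ?thesis using assms(3)[unfolded c1 h(1)]
  proof (cases rule: step.cases)
    case st_suc
    have s: "step C2 (Lbl F) (Some (Ind (Suc n) r s2))" using h st_suc by (auto intro: step.intros)
    have m: "M C1'' (Ind (Suc n) r s2)" using h st_suc unfolding M_def by (auto intro: step.intros simp: M_def)
    show ?thesis using wit[OF s m] .
  next
    case st_var
    have s: "step C2 (Lbl F) (Some (Tmc (DVar n) (Suc n) r s2))" using h st_var by (auto intro: step.intros)
    have m: "M C1'' (Tmc (DVar n) (Suc n) r s2)" using h st_var unfolding M_def by (auto intro: step.intros simp: M_def)
    show ?thesis using wit[OF s m] .
  qed
next
  fix u k r s1 s2 assume h: "C1 = Tmc u k r s1" "C2 = Tmc u k r s2" "Q s1 s2" "okr r" "closed_at k u"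
  have c1: "C1' = C1" using tau_Tmc assms(2) h by blast
  show ?thesis using assms(3)[unfolded c1 h(1)]
  proof (cases rule: step.cases)
    case (lam_suc k')
    have s: "step C2 (Lbl F) (Some (Tmc (DLam u) k' r s2))" using h lam_suc by (auto intro: step.intros)
    have m: "M C1'' (Tmc (DLam u) k' r s2)" using h lam_suc unfolding M_def by (auto intro: step.intros simp: M_def)
    show ?thesis using wit[OF s m] .
  next
    case lam_zero
    have s: "step C2 (Lbl F) (Some (Tmc (DLam u) 0 r s2))" using h lam_zero by (auto intro: step.intros)
    have m: "M C1'' (Tmc (DLam u) 0 r s2)" using h lam_zero unfolding M_def by (auto intro: step.intros closed_mono simp: M_def)
    show ?thesis using wit[OF s m] .
  next
    case appfun
    have s: "step C2 (Lbl F) (Some (Ind 0 ((u, k) # r) s2))" using h appfun by (auto intro: step.intros)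
    have m: "M C1'' (Ind 0 ((u, k) # r) s2)" using h appfun unfolding M_def by (auto intro: step.intros simp: M_def okr_def)
    show ?thesis using wit[OF s m] .
  next
    case (st_app t k2 r')
    have s: "step C2 (Lbl F) (Some (Tmc (DApp t u) (max k k2) r' s2))" using h st_app by (auto intro: step.intros)
    have m: "M C1'' (Tmc (DApp t u) (max k k2) r' s2)" using h st_app unfolding M_def by (auto intro: step.intros closed_mono simp: M_def okr_def)
    show ?thesis using wit[OF s m] .
  next
    case (st_done a b)
    obtain c d where s2: "s2 = Clo c d" by (cases s2)
    have "closed_tm u" using h st_done by (simp add: closed_tm_def)
    then have "app_bisim (Clo a (Clo u [] # b)) (Clo c (Clo u [] # d))"
      using h(3) st_done s2 by (simp add: Q_def)
    note ab = this
    have s: "step C2 (Lbl F) (Some (Ev c (Clo u [] # d) []))" using h st_done s2 by (auto intro: step.intros)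
    have m: "M C1'' (Ev c (Clo u [] # d) [])" using ab h st_done s2 unfolding M_def by (auto intro: step.intros simp: M_def)
    show ?thesis using wit[OF s m] .
  qed
qed

lemma M_bisim: "mach_bisimulation M"
  unfolding mach_bisimulation_def
proof (intro conjI)
  show "\<forall>x y. M x y \<longrightarrow> M y x"
    unfolding M_def by (auto intro: app_bisim_sym Q_sym)
next
  show "\<forall>C1 C2 F. M C1 C2 \<longrightarrow>
        (\<forall>C1' C1''. tau_star C1 C1' \<longrightarrow> step C1' (Lbl F) (Some C1'') \<longrightarrow>
           (\<exists>C2' C2''. tau_star C2 C2' \<and> step C2' (Lbl F) (Some C2'') \<and> M C1'' C2'')) \<and>
        (\<forall>C1'. tau_star C1 C1' \<longrightarrow> step C1' (Lbl F) None \<longrightarrow>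
           (\<exists>C2'. tau_star C2 C2' \<and> step C2' (Lbl F) None))"
    using M_sim step_no_None by blast
qed

theorem theorem5p6:
  assumes "closed_clo (Clo t e)" and "closed_clo (Clo s d)"
  shows "app_bisim (Clo t e) (Clo s d) \<longleftrightarrow> mach_bisim (Ev t e []) (Ev s d [])"
proof
  assume "app_bisim (Clo t e) (Clo s d)"
  then have "M (Ev t e []) (Ev s d [])" unfolding M_def by blast
  then show "mach_bisim (Ev t e []) (Ev s d [])" using M_bisim mach_bisim_def by blast
next
  assume H: "mach_bisim (Ev t e []) (Ev s d [])"
  define R where "R x y = (closed_clo x \<and> closed_clo y \<and>
     (case x of Clo t e \<Rightarrow> case y of Clo s d \<Rightarrow> mach_bisim (Ev t e []) (Ev s d [])))" for x y
  have "app_bisimulation R"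
    unfolding app_bisimulation_def
  proof (intro conjI allI impI)
    fix x y assume "R x y" then show "R y x"
      unfolding R_def by (auto split: clo.splits intro: mach_bisim_sym)
  next
    fix x y assume "R x y" then show "closed_clo x" unfolding R_def by blast
  next
    fix x y assume "R x y" then show "closed_clo y" unfolding R_def by blast
  next
    fix t e s d t' e'
    assume R1: "R (Clo t e) (Clo s d)" and T: "tau_star (Ev t e []) (Ev (DLam t') e' [])"
    then have B: "mach_bisim (Ev t e []) (Ev s d [])" and ct: "closed_clo (Clo t e)"
      and cs: "closed_clo (Clo s d)" unfolding R_def by auto
    obtain C2' C2'' where C: "tau_star (Ev s d []) C2'" "step C2' (Lbl FArg) (Some C2'')"
      "mach_bisim (Ind 0 [] (Clo t' e')) C2''"
      using mach_bisim_step[OF B T st_arg] by blast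
    obtain s' d' where C2: "C2' = Ev (DLam s') d' []" "C2'' = Ind 0 [] (Clo s' d')"
      using C(2) by (auto elim: step.cases)
    show "\<exists>s' d'. tau_star (Ev s d []) (Ev (DLam s') d' []) \<and>
           (\<forall>t''. closed_tm t'' \<longrightarrow> R (Clo t' (Clo t'' [] # e')) (Clo s' (Clo t'' [] # d')))"
    proof (intro exI conjI allI impI)
      show "tau_star (Ev s d []) (Ev (DLam s') d' [])" using C C2 by simp
    next
      fix u assume cu: "closed_tm u"
      have "lv u = 0" using lv_closed[of 0 u] cu by (simp add: closed_tm_def)
      then have "mach_bisim (Tmc u 0 [] (Clo t' e')) (Tmc u 0 [] (Clo s' d'))"
        using gen_tm[of "[]" "Clo t' e'" "Clo s' d'" u] C(3) C2 by simp
      then have "mach_bisim (Ev t' (Clo u [] # e') []) (Ev s' (Clo u [] # d') [])"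
        using bis_det[OF _ st_done _ st_done] tau_Tmc by blast
      moreover have "closed_clo (Clo t' (Clo u [] # e'))" using closed_final[OF ct T cu] .
      moreover have "closed_clo (Clo s' (Clo u [] # d'))"
        using closed_final[OF cs _ cu] C C2 by simp
      ultimately show "R (Clo t' (Clo u [] # e')) (Clo s' (Clo u [] # d'))"
        unfolding R_def by simp
    qed
  qed
  then show "app_bisim (Clo t e) (Clo s d)"
    unfolding app_bisim_def using H assms R_def by auto
qed

end
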